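(* For $n\ge3$ and $k\ge4$, the number of cyclic permutations $\pi\in\mathfrak S_n$ whose one-line notation avoids $\delta_k=k(k-1)\cdots21$, such that every cyclic rotation of $C(\pi)$ avoids $1342$, and with $\pi_1=n-1$ and $\pi_n=1$, equals $b^\circ_{n-1,k-1}(1342)$, where $b^\circ_{m,j}(1342)$ denotes the number of cyclic permutations $\sigma\in\mathfrak S_m$ whose one-line notation avoids $\delta_j$, such that every cyclic rotation of $C(\sigma)$ avoids $1342$, and with $\sigma_1=m$.
   Context: A permutation $\pi\in\mathfrak S_n$ is cyclic if it consists of a single $n$-cycle. For cyclic $\pi$, $C(\pi)=(1,c_2,\dots,c_n)$ with $c_2=\pi(1)$, $c_{i+1}=\pi(c_i)$; its cyclic rotations are the sequences $c_ic_{i+1}\cdots c_nc_1\cdots c_{i-1}$ (with $c_1=1$). A sequence avoids a pattern $\sigma\in\mathfrak S_m$ if no subsequence of length $m$ is in the same relative order as $\sigma$. The one-line notation of $\pi$ is $\pi_1\cdots\pi_n$, $\pi_i=\pi(i)$. *)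

theory Defs
  imports "HOL-Combinatorics.Permutations"
begin

definition contains_pattern :: "nat list \<Rightarrow> nat list \<Rightarrow> bool" where
  "contains_pattern w sigma \<longleftrightarrow>
     (\<exists>idx :: nat \<Rightarrow> nat.
        (\<forall>a b. a < b \<and> b < length sigma \<longrightarrow> idx a < idx b) \<and>
        (\<forall>a < length sigma. idx a < length w) \<and>
        (\<forall>a < length sigma. \<forall>b < length sigma.
            (w ! idx a < w ! idx b \<longleftrightarrow> sigma ! a < sigma ! b)))"

definition avoids :: "nat list \<Rightarrow> nat list \<Rightarrow> bool" where
  "avoids w sigma \<longleftrightarrow> \<not> contains_pattern w sigma"

definition delta :: "nat \<Rightarrow> nat list" where
  "delta k = rev [1..<k+1]"

definition one_line :: "nat \<Rightarrow> (nat \<Rightarrow> nat) \<Rightarrow> nat list" where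
  "one_line n p = map p [1..<n+1]"

definition cyclic_perm :: "nat \<Rightarrow> (nat \<Rightarrow> nat) \<Rightarrow> bool" where
  "cyclic_perm n p \<longleftrightarrow> p permutes {1..n} \<and> (\<forall>j\<in>{1..n}. \<exists>i. (p ^^ i) 1 = j)"

definition cycle_form :: "nat \<Rightarrow> (nat \<Rightarrow> nat) \<Rightarrow> nat list" where
  "cycle_form n p = map (\<lambda>i. (p ^^ i) 1) [0..<n]"

definition b_circ_1342 :: "nat \<Rightarrow> nat \<Rightarrow> nat" where
  "b_circ_1342 m j = card {s. cyclic_perm m s \<and> avoids (one_line m s) (delta j)
       \<and> (\<forall>i < m. avoids (rotate i (cycle_form m s)) [1,3,4,2]) \<and> s 1 = m}"

end

theory Submission
  imports Defs
begin

lemma iter_in: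
  fixes p :: "nat \<Rightarrow> nat"
  assumes "p permutes {1..N}" "1 \<le> N"
  shows "(p^^l) 1 \<in> {1..N}"
proof (induction l)
  case 0 then show ?case using assms by simp
next
  case (Suc l) then show ?case using permutes_in_image[OF assms(1)] by simp
qed

lemma funpow_shift:
  fixes p :: "nat \<Rightarrow> nat"
  assumes "inj p" "l \<le> l'" "(p^^l) x = (p^^l') x"
  shows "x = (p^^(l'-l)) x"
proof -
  have "(p^^l') x = (p^^l) ((p^^(l'-l)) x)"
    using assms(2) by (metis funpow_add le_add_diff_inverse comp_apply)
  then show ?thesis using assms inj_fn[OF assms(1), of l] by (metis injD)
qed

lemma period_cover:
  fixes p :: "nat \<Rightarrow> nat"
  assumes "cyclic_perm N p" "0 < d" "(p^^d) 1 = 1"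
  shows "N \<le> d"
proof -
  have "{1..N} \<subseteq> (\<lambda>i. (p^^i) 1) ` {0..<d}"
  proof
    fix x assume "x \<in> {1..N}"
    then obtain i where "(p^^i) 1 = x" using assms(1) unfolding cyclic_perm_def by blast
    then have "(p^^(i mod d)) 1 = x" using funpow_mod_eq[where f=p and n=d and x=1 and m=i] assms(3) by simp
    then show "x \<in> (\<lambda>i. (p^^i) 1) ` {0..<d}" using assms(2) by force
  qed
  then have "card {1..N} \<le> card ((\<lambda>i. (p^^i) 1) ` {0..<d})"
    by (intro card_mono) auto
  also have "\<dots> \<le> card {0..<d}" by (rule card_image_le) simp
  finally have "card {1..N} \<le> card {0..<d}" .
  then show ?thesis by simp
qed

lemma cyc_return:
  fixes p :: "nat \<Rightarrow> nat"
  assumes "cyclic_perm N p" "1 \<le> N"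
  shows "\<exists>d. 0 < d \<and> d \<le> N \<and> (p^^d) 1 = 1"
proof -
  have perm: "p permutes {1..N}" using assms unfolding cyclic_perm_def by simp
  have sub: "(\<lambda>i. (p^^i) 1) ` {0..N} \<subseteq> {1..N}" using iter_in[OF perm assms(2)] by blast
  have "card ((\<lambda>i. (p^^i) 1) ` {0..N}) \<le> card {1..N}"
    using sub by (intro card_mono) auto
  then have "card ((\<lambda>i. (p^^i) 1) ` {0..N}) < card {0..N}" by simp
  then have "\<not> inj_on (\<lambda>i. (p^^i) 1) {0..N}" using pigeonhole by blast
  then obtain a b where ab: "a \<in> {0..N}" "b \<in> {0..N}" "a \<noteq> b" "(p^^a) 1 = (p^^b) 1"
    unfolding inj_on_def by blast
  have "\<exists>l l'. l \<le> N \<and> l' \<le> N \<and> l < l' \<and> (p^^l) 1 = (p^^l') 1"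
  proof (cases "a < b")
    case True then show ?thesis using ab by (intro exI[of _ a] exI[of _ b]) auto
  next
    case False then show ?thesis using ab by (intro exI[of _ b] exI[of _ a]) auto
  qed
  then obtain l l' where ll: "l \<le> N" "l' \<le> N" "l < l'" "(p^^l) 1 = (p^^l') 1" by blast
  have "1 = (p^^(l'-l)) 1"
    using funpow_shift[of p l l' 1] ll permutes_inj[OF perm] by simp
  then show ?thesis using ll by (intro exI[of _ "l'-l"]) auto
qed

lemma cyc_struct:
  fixes p :: "nat \<Rightarrow> nat"
  assumes "cyclic_perm N p" "1 \<le> N"
  shows "(p^^N) 1 = 1" and "\<And>l l'. l < N \<Longrightarrow> l' < N \<Longrightarrow> (p^^l) 1 = (p^^l') 1 \<Longrightarrow> l = l'"
proof -
  have perm: "p permutes {1..N}" using assms unfolding cyclic_perm_def by simp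
  obtain d where d: "0 < d" "d \<le> N" "(p^^d) 1 = 1" using cyc_return[OF assms] by blast
  have "N \<le> d" using period_cover[OF assms(1) d(1) d(3)] .
  then have "d = N" using d(2) by simp
  then show "(p^^N) 1 = 1" using d by simp
  have noc: False if ab: "a < b" "b < N" "(p^^a) 1 = (p^^b) 1" for a b
  proof -
    have "1 = (p^^(b-a)) 1"
      using funpow_shift[of p a b 1] ab permutes_inj[OF perm] by simp
    then have "N \<le> b - a" using period_cover[OF assms(1), of "b-a"] ab by simp
    then show False using ab by simp
  qed
  fix l l' assume h: "l < N" "l' < N" "(p^^l) 1 = (p^^l') 1"
  show "l = l'"
  proof (rule ccontr)
    assume "l \<noteq> l'"
    then have "l < l' \<or> l' < l" by linarith
    then show False using noc[of l l'] noc[of l' l] h by auto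
  qed
qed

definition decs :: "(nat \<Rightarrow> nat) \<Rightarrow> nat \<Rightarrow> nat \<Rightarrow> bool" where
  "decs p N K \<longleftrightarrow> (\<exists>q. (\<forall>a b. a < b \<and> b < K \<longrightarrow> q a < q b) \<and> (\<forall>a<K. q a \<in> {1..N})
      \<and> (\<forall>a b. a < b \<and> b < K \<longrightarrow> p (q b) < p (q a)))"

lemma delta_nth: "a < K \<Longrightarrow> delta K ! a = K - a"
  unfolding delta_def by (simp del: upt_Suc add: rev_nth)

lemma one_line_nth: "i < N \<Longrightarrow> one_line N p ! i = p (Suc i)"
  unfolding one_line_def by (simp del: upt_Suc)

lemma length_one_line[simp]: "length (one_line N p) = N"
  unfolding one_line_def by simp

lemma length_delta[simp]: "length (delta K) = K"
  unfolding delta_def by simp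

lemma contains_delta: "contains_pattern (one_line N p) (delta K) \<longleftrightarrow> decs p N K"
proof
  assume "contains_pattern (one_line N p) (delta K)"
  then obtain idx where i1: "\<forall>a b. a < b \<and> b < K \<longrightarrow> idx a < idx b"
    and i2: "\<forall>a<K. idx a < N"
    and i3: "\<forall>a<K. \<forall>b<K. (one_line N p ! idx a < one_line N p ! idx b \<longleftrightarrow> delta K ! a < delta K ! b)"
    unfolding contains_pattern_def by auto
  show "decs p N K" unfolding decs_def
  proof (intro exI[of _ "\<lambda>a. Suc (idx a)"] conjI allI impI)
    fix a b assume ab: "a < b \<and> b < K"
    then show "Suc (idx a) < Suc (idx b)" using i1 by simp
    have "one_line N p ! idx b < one_line N p ! idx a \<longleftrightarrow> delta K ! b < delta K ! a"
      using i3 ab by auto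
    moreover have "delta K ! b < delta K ! a" using ab by (simp add: delta_nth) linarith
    ultimately show "p (Suc (idx b)) < p (Suc (idx a))" using ab i2 by (simp add: one_line_nth)
  next
    fix a assume "a < K" then show "Suc (idx a) \<in> {1..N}" using i2 by auto
  qed
next
  assume "decs p N K"
  then obtain q where q1: "\<forall>a b. a < b \<and> b < K \<longrightarrow> q a < q b" and q2: "\<forall>a<K. q a \<in> {1..N}"
      and q3: "\<forall>a b. a < b \<and> b < K \<longrightarrow> p (q b) < p (q a)" unfolding decs_def by blast
  show "contains_pattern (one_line N p) (delta K)" unfolding contains_pattern_def
  proof (intro exI[of _ "\<lambda>a. q a - 1"] conjI allI impI)
    fix a b assume ab: "a < b \<and> b < length (delta K)"
    then have "q a < q b" "1 \<le> q a" using q1 q2 by auto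
    then show "q a - 1 < q b - 1" by linarith
  next
    fix a assume "a < length (delta K)"
    then have "q a \<in> {1..N}" using q2 by simp
    then show "q a - 1 < length (one_line N p)" by simp linarith
  next
    fix a b assume a: "a < length (delta K)" and b: "b < length (delta K)"
    have "q a \<in> {1..N}" "q b \<in> {1..N}" using q2 a b by auto
    then have qa: "one_line N p ! (q a - 1) = p (q a)" and qb: "one_line N p ! (q b - 1) = p (q b)"
      using one_line_nth[of "q a - 1" N p] one_line_nth[of "q b - 1" N p] by auto
    show "one_line N p ! (q a - 1) < one_line N p ! (q b - 1) \<longleftrightarrow> delta K ! a < delta K ! b"
    proof (cases "a < b")
      case True
      then have "p (q b) < p (q a)" using q3 b by simp
      moreover have "\<not> K - a < K - b" using True by simp
      ultimately show ?thesis using a b qa qb by (simp add: delta_nth)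
    next
      case False
      then consider "a = b" | "b < a" by linarith
      then show ?thesis
      proof cases
        case 1 then show ?thesis by simp
      next
        case 2
        then have "p (q a) < p (q b)" using q3 a by simp
        moreover have "K - a < K - b" using 2 a by simp
        ultimately show ?thesis using a b qa qb by (simp add: delta_nth)
      qed
    qed
  qed
qed

lemma decs_le: "decs p N K \<Longrightarrow> K \<le> N"
proof -
  assume "decs p N K"
  then obtain q where q1: "\<forall>a b. a < b \<and> b < K \<longrightarrow> q a < q b" and q2: "\<forall>a<K. q a \<in> {1..N}"
    unfolding decs_def by blast
  have "a < K \<Longrightarrow> a + 1 \<le> q a" for a
  proof (induction a)
    case 0 then show ?case using q2 by auto
  next
    case (Suc a) then show ?case using q1[rule_format, of a "Suc a"] by simp
  qed
  then show "K \<le> N"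
  proof (cases K)
    case (Suc K')
    then have "K' + 1 \<le> q K'" "q K' \<le> N" using q2 \<open>\<And>a. a < K \<Longrightarrow> a + 1 \<le> q a\<close> by auto
    then show ?thesis using Suc by simp
  qed simp
qed

definition occ :: "nat list \<Rightarrow> nat \<Rightarrow> nat \<Rightarrow> nat \<Rightarrow> nat \<Rightarrow> bool" where
  "occ w p0 p1 p2 p3 \<longleftrightarrow> w!p0 < w!p3 \<and> w!p3 < w!p1 \<and> w!p1 < w!p2"

definition cyc :: "nat \<Rightarrow> nat \<Rightarrow> nat \<Rightarrow> nat \<Rightarrow> nat \<Rightarrow> bool" where
  "cyc L p0 p1 p2 p3 \<longleftrightarrow> p0 < L \<and> p1 < L \<and> p2 < L \<and> p3 < L \<and>
     (p0 < p1 \<and> p1 < p2 \<and> p2 < p3 \<or> p1 < p2 \<and> p2 < p3 \<and> p3 < p0 \<or>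
      p2 < p3 \<and> p3 < p0 \<and> p0 < p1 \<or> p3 < p0 \<and> p0 < p1 \<and> p1 < p2)"

definition cycfree :: "nat list \<Rightarrow> bool" where
  "cycfree w \<longleftrightarrow> \<not> (\<exists>p0 p1 p2 p3. cyc (length w) p0 p1 p2 p3 \<and> occ w p0 p1 p2 p3)"

lemma lt4: "(a::nat) < 4 \<Longrightarrow> a = 0 \<or> a = 1 \<or> a = 2 \<or> a = 3" by arith

lemma C4: "contains_pattern u [1,3,4,2] \<longleftrightarrow>
  (\<exists>i0 i1 i2 i3. i0 < i1 \<and> i1 < i2 \<and> i2 < i3 \<and> i3 < length u \<and> occ u i0 i1 i2 i3)"
proof
  assume "contains_pattern u [1,3,4,2]"
  then obtain idx where i1: "\<forall>a b. a < b \<and> b < length [1,3,4,2::nat] \<longrightarrow> idx a < idx b"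
    and i2: "\<forall>a<length [1,3,4,2::nat]. idx a < length u"
    and i3: "\<forall>a<length [1,3,4,2::nat]. \<forall>b<length [1,3,4,2::nat]. (u ! idx a < u ! idx b \<longleftrightarrow> [1,3,4,2::nat] ! a < [1,3,4,2] ! b)"
    unfolding contains_pattern_def by blast
  have "u ! idx 0 < u ! idx 3" using i3[rule_format, of 0 3] by simp
  moreover have "u ! idx 3 < u ! idx 1" using i3[rule_format, of 3 1] by simp
  moreover have "u ! idx 1 < u ! idx 2" using i3[rule_format, of 1 2] by simp
  moreover have "idx 0 < idx 1" "idx 1 < idx 2" "idx 2 < idx 3" using i1 by auto
  moreover have "idx 3 < length u" using i2 by simp
  ultimately show "\<exists>i0 i1 i2 i3. i0 < i1 \<and> i1 < i2 \<and> i2 < i3 \<and> i3 < length u \<and> occ u i0 i1 i2 i3"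
    unfolding occ_def by blast
next
  assume "\<exists>i0 i1 i2 i3. i0 < i1 \<and> i1 < i2 \<and> i2 < i3 \<and> i3 < length u \<and> occ u i0 i1 i2 i3"
  then obtain i0 i1 i2 i3 where h: "i0 < i1" "i1 < i2" "i2 < i3" "i3 < length u" "occ u i0 i1 i2 i3" by blast
  define idx where "idx = (\<lambda>a::nat. if a = 0 then i0 else if a = 1 then i1 else if a = 2 then i2 else i3)"
  show "contains_pattern u [1,3,4,2]" unfolding contains_pattern_def
  proof (intro exI[of _ idx] conjI allI impI)
    fix a b assume ab: "a < b \<and> b < length [1,3,4,2::nat]"
    then have "b < 4" by simp
    then show "idx a < idx b" using ab h lt4[of a] lt4[of b] unfolding idx_def by auto
  next
    fix a assume "a < length [1,3,4,2::nat]"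
    then show "idx a < length u" using h lt4[of a] unfolding idx_def by auto
  next
    fix a b assume a: "a < length [1,3,4,2::nat]" and b: "b < length [1,3,4,2::nat]"
    have o: "u!i0 < u!i3" "u!i3 < u!i1" "u!i1 < u!i2" using h(5) unfolding occ_def by auto
    show "u ! idx a < u ! idx b \<longleftrightarrow> [1,3,4,2::nat] ! a < [1,3,4,2] ! b"
      using a b o lt4[of a] lt4[of b] unfolding idx_def by auto
  qed
qed

lemma mod2: "(x::nat) < 2 * L \<Longrightarrow> x mod L = (if x < L then x else x - L)"
proof (cases "x < L")
  case False
  assume "x < 2 * L"
  then have "x - L < L" using False by simp
  then show ?thesis using False le_mod_geq[of L x] by simp
qed simp

lemma rot_fwd:
  assumes "r < L" "i0 < i1" "i1 < i2" "i2 < i3" "i3 < L"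
  shows "cyc L ((r+i0) mod L) ((r+i1) mod L) ((r+i2) mod L) ((r+i3) mod L)"
proof -
  have "r + i0 < 2*L" "r + i1 < 2*L" "r + i2 < 2*L" "r + i3 < 2*L" using assms by auto
  then have e: "(r+i0) mod L = (if r+i0 < L then r+i0 else r+i0-L)"
    "(r+i1) mod L = (if r+i1 < L then r+i1 else r+i1-L)"
    "(r+i2) mod L = (if r+i2 < L then r+i2 else r+i2-L)"
    "(r+i3) mod L = (if r+i3 < L then r+i3 else r+i3-L)" using mod2 by blast+
  consider "r+i3 < L" | "r+i2 < L" "\<not> r+i3 < L" | "r+i1 < L" "\<not> r+i2 < L"
     | "r+i0 < L" "\<not> r+i1 < L" | "\<not> r+i0 < L" using assms by linarith
  then show ?thesis
  proof cases
    case 1 then show ?thesis unfolding cyc_def e using assms by simp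
  next
    case 2
    have "r+i3-L < r+i0" "r+i3-L < L" using 2 assms by linarith+
    then show ?thesis unfolding cyc_def e using assms 2 by simp
  next
    case 3
    have "r+i3-L < r+i0" "r+i3-L < L" "r+i2-L < r+i3-L" using 3 assms by linarith+
    then show ?thesis unfolding cyc_def e using assms 3 by simp
  next
    case 4
    have "r+i3-L < r+i0" "r+i3-L < L" "r+i2-L < r+i3-L" "r+i1-L < r+i2-L" using 4 assms by linarith+
    then show ?thesis unfolding cyc_def e using assms 4 by simp
  next
    case 5
    have "r+i3-L < L" "r+i2-L < r+i3-L" "r+i1-L < r+i2-L" "r+i0-L < r+i1-L" using 5 assms by linarith+
    then show ?thesis unfolding cyc_def e using assms 5 by simp
  qed
qed

lemma rot_occ:
  assumes "length w = L" "i0 < L" "i1 < L" "i2 < L" "i3 < L"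
  shows "occ (rotate r w) i0 i1 i2 i3 \<longleftrightarrow>
         occ w ((r+i0) mod L) ((r+i1) mod L) ((r+i2) mod L) ((r+i3) mod L)"
  using assms unfolding occ_def by (simp add: nth_rotate)

lemma rot_bwd:
  assumes "cyc L p0 p1 p2 p3"
  shows "\<exists>r i0 i1 i2 i3. r < L \<and> i0 < i1 \<and> i1 < i2 \<and> i2 < i3 \<and> i3 < L \<and>
     (r+i0) mod L = p0 \<and> (r+i1) mod L = p1 \<and> (r+i2) mod L = p2 \<and> (r+i3) mod L = p3"
proof -
  have b: "p0 < L" "p1 < L" "p2 < L" "p3 < L" using assms unfolding cyc_def by auto
  have m: "(p0 + (p + L - p0)) mod L = p" if "p < L" "p < p0" for p
  proof -
    have "p0 + (p + L - p0) = p + L" using that b by simp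
    then show ?thesis using that le_mod_geq[of L "p+L"] by simp
  qed
  have m2: "(p0 + (p - p0)) mod L = p" if "p < L" "p0 \<le> p" for p
    using that by simp
  consider "p0 < p1 \<and> p1 < p2 \<and> p2 < p3" | "p1 < p2 \<and> p2 < p3 \<and> p3 < p0"
    | "p2 < p3 \<and> p3 < p0 \<and> p0 < p1" | "p3 < p0 \<and> p0 < p1 \<and> p1 < p2"
    using assms unfolding cyc_def by blast
  then show ?thesis
  proof cases
    case 1
    show ?thesis
      by (rule exI[of _ p0], rule exI[of _ 0], rule exI[of _ "p1 - p0"], rule exI[of _ "p2 - p0"],
          rule exI[of _ "p3 - p0"]) (use 1 b m2 in auto)
  next
    case 2
    show ?thesis
      by (rule exI[of _ p0], rule exI[of _ 0], rule exI[of _ "p1 + L - p0"], rule exI[of _ "p2 + L - p0"],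
          rule exI[of _ "p3 + L - p0"]) (use 2 b m in auto)
  next
    case 3
    show ?thesis
      by (rule exI[of _ p0], rule exI[of _ 0], rule exI[of _ "p1 - p0"], rule exI[of _ "p2 + L - p0"],
          rule exI[of _ "p3 + L - p0"]) (use 3 b m m2 in auto)
  next
    case 4
    show ?thesis
      by (rule exI[of _ p0], rule exI[of _ 0], rule exI[of _ "p1 - p0"], rule exI[of _ "p2 - p0"],
          rule exI[of _ "p3 + L - p0"]) (use 4 b m m2 in auto)
  qed
qed

lemma rot_avoid_iff:
  "(\<forall>r < length w. avoids (rotate r w) [1,3,4,2]) \<longleftrightarrow> cycfree w"
proof
  assume A: "\<forall>r < length w. avoids (rotate r w) [1,3,4,2]"
  show "cycfree w" unfolding cycfree_def
  proof
    assume "\<exists>p0 p1 p2 p3. cyc (length w) p0 p1 p2 p3 \<and> occ w p0 p1 p2 p3"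
    then obtain p0 p1 p2 p3 where c: "cyc (length w) p0 p1 p2 p3" and o: "occ w p0 p1 p2 p3" by blast
    obtain r i0 i1 i2 i3 where ri: "r < length w" "i0 < i1" "i1 < i2" "i2 < i3" "i3 < length w"
      "(r+i0) mod length w = p0" "(r+i1) mod length w = p1" "(r+i2) mod length w = p2" "(r+i3) mod length w = p3"
      using rot_bwd[OF c] by blast
    have "occ (rotate r w) i0 i1 i2 i3"
      using rot_occ[of w "length w" i0 i1 i2 i3 r] ri o by simp
    then have "contains_pattern (rotate r w) [1,3,4,2]"
      unfolding C4 using ri by (intro exI[of _ i0] exI[of _ i1] exI[of _ i2] exI[of _ i3]) simp
    then show False using A ri(1) unfolding avoids_def by blast
  qed
next
  assume F: "cycfree w"
  show "\<forall>r < length w. avoids (rotate r w) [1,3,4,2]"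
  proof (intro allI impI)
    fix r assume r: "r < length w"
    show "avoids (rotate r w) [1,3,4,2]" unfolding avoids_def
    proof
      assume "contains_pattern (rotate r w) [1,3,4,2]"
      then obtain i0 i1 i2 i3 where h: "i0 < i1" "i1 < i2" "i2 < i3" "i3 < length w"
        "occ (rotate r w) i0 i1 i2 i3" unfolding C4 by auto
      have "occ w ((r+i0) mod length w) ((r+i1) mod length w) ((r+i2) mod length w) ((r+i3) mod length w)"
        using rot_occ[of w "length w" i0 i1 i2 i3 r] h by simp
      moreover have "cyc (length w) ((r+i0) mod length w) ((r+i1) mod length w) ((r+i2) mod length w) ((r+i3) mod length w)"
        using rot_fwd[OF r h(1-4)] .
      ultimately show False using F unfolding cycfree_def by blast
    qed
  qed
qed

lemma cycfree_append_fwd: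
  assumes "cycfree (xs @ [y])" shows "cycfree xs"
  unfolding cycfree_def
proof
  assume "\<exists>p0 p1 p2 p3. cyc (length xs) p0 p1 p2 p3 \<and> occ xs p0 p1 p2 p3"
  then obtain p0 p1 p2 p3 where c: "cyc (length xs) p0 p1 p2 p3" and o: "occ xs p0 p1 p2 p3" by blast
  have b: "p0 < length xs" "p1 < length xs" "p2 < length xs" "p3 < length xs" using c unfolding cyc_def by auto
  have "cyc (length (xs @ [y])) p0 p1 p2 p3" using c unfolding cyc_def by auto
  moreover have "occ (xs @ [y]) p0 p1 p2 p3" using o b unfolding occ_def by (simp add: nth_append)
  ultimately show False using assms unfolding cycfree_def by blast
qed

lemma cycfree_append_bwd:
  assumes F: "cycfree xs" and D: "distinct xs" and L: "length xs = m" and m2: "2 \<le> m"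
    and x0: "xs ! 0 = 1" and x1: "xs ! 1 = m" and S: "set xs \<subseteq> {1..m}" and Y: "m < y"
  shows "cycfree (xs @ [y])"
  unfolding cycfree_def
proof
  assume "\<exists>p0 p1 p2 p3. cyc (length (xs @ [y])) p0 p1 p2 p3 \<and> occ (xs @ [y]) p0 p1 p2 p3"
  then obtain p0 p1 p2 p3 where c: "cyc (m+1) p0 p1 p2 p3" and o: "occ (xs @ [y]) p0 p1 p2 p3"
    using L by auto
  define w where "w = xs @ [y]"
  have wl: "i < m \<Longrightarrow> w ! i = xs ! i" for i using L unfolding w_def by (simp add: nth_append)
  have wm: "w ! m = y" using L[symmetric] unfolding w_def by simp
  have xr: "i < m \<Longrightarrow> 1 \<le> xs ! i \<and> xs ! i \<le> m" for i
  proof -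
    assume "i < m"
    then have "xs ! i \<in> set xs" using L by simp
    then show ?thesis using S by auto
  qed
  have wle: "i \<le> m \<Longrightarrow> w ! i \<le> y" for i
  proof -
    assume "i \<le> m"
    then consider "i < m" | "i = m" by linarith
    then show "w ! i \<le> y"
    proof cases
      case 1 then show ?thesis using wl xr Y by fastforce
    qed (simp add: wm)
  qed
  have b: "p0 \<le> m" "p1 \<le> m" "p2 \<le> m" "p3 \<le> m" using c unfolding cyc_def by auto
  have o': "w!p0 < w!p3" "w!p3 < w!p1" "w!p1 < w!p2" using o unfolding occ_def w_def by auto
  show False
  proof (cases "p0 < m \<and> p1 < m \<and> p2 < m \<and> p3 < m")
    case True
    have "cyc (length xs) p0 p1 p2 p3" using c True L unfolding cyc_def by auto
    moreover have "occ xs p0 p1 p2 p3" using o' True wl unfolding occ_def by simp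
    ultimately show False using F unfolding cycfree_def by blast
  next
    case False
    have "p0 \<noteq> m" using o' wm wle[OF b(4)] by auto
    moreover have "p3 \<noteq> m" using o' wm wle[OF b(2)] by auto
    moreover have "p1 \<noteq> m" using o' wm wle[OF b(3)] by auto
    ultimately have lt: "p0 < m" "p1 < m" "p3 < m" using b by auto
    then have p2: "p2 = m" using False b by auto
    have ord: "p3 < p0" "p0 < p1" using c p2 lt unfolding cyc_def by auto
    have v: "xs!p0 < xs!p3" "xs!p3 < xs!p1" using o' lt wl by auto
    have "p3 \<noteq> 0"
    proof
      assume "p3 = 0" then have "xs!p3 = 1" using x0 by simp
      then show False using v(1) xr[OF lt(1)] by simp
    qed
    moreover have "p3 \<noteq> 1"
    proof
      assume "p3 = 1" then have "xs!p3 = m" using x1 by simp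
      then show False using v(2) xr[OF lt(2)] by simp
    qed
    ultimately have p3: "2 \<le> p3" by simp
    have "xs ! p1 \<noteq> xs ! 1" using D L lt(2) ord p3 m2 nth_eq_iff_index_eq[of xs p1 1] by auto
    then have v3: "xs ! p1 < xs ! 1" using xr[OF lt(2)] x1 by auto
    have "cyc (length xs) p0 p1 1 p3" using lt ord p3 L unfolding cyc_def by auto
    moreover have "occ xs p0 p1 1 p3" using v v3 unfolding occ_def by simp
    ultimately show False using F unfolding cycfree_def by blast
  qed
qed

lemma dec_avoid_j:
  assumes D: "decs s M K" and j: "j \<in> {1..M}" and t: "t \<in> {1..M}" "j < t" "s j = 1" "s t = 2"
    and pos: "\<forall>x\<in>{1..M}. 1 \<le> s x" and inj2: "\<forall>x\<in>{1..M}. s x = 2 \<longrightarrow> x = t"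
    and one: "\<forall>x\<in>{1..M}. s x = 1 \<longrightarrow> x = j" and K: "2 \<le> K"
  shows "\<exists>q. (\<forall>a b. a < b \<and> b < K \<longrightarrow> q a < q b) \<and> (\<forall>a<K. q a \<in> {1..M})
      \<and> (\<forall>a b. a < b \<and> b < K \<longrightarrow> s (q b) < s (q a)) \<and> (\<forall>a<K. q a \<noteq> j)"
proof -
  obtain q where q1: "\<forall>a b. a < b \<and> b < K \<longrightarrow> q a < q b" and q2: "\<forall>a<K. q a \<in> {1..M}"
      and q3: "\<forall>a b. a < b \<and> b < K \<longrightarrow> s (q b) < s (q a)" using D unfolding decs_def by blast
  show ?thesis
  proof (cases "\<exists>a<K. q a = j")
    case False then show ?thesis using q1 q2 q3 by blast
  next
    case True
    then obtain a where a: "a < K" "q a = j" by blast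
    have aK: "a = K - 1"
    proof (rule ccontr)
      assume "a \<noteq> K - 1"
      then have "a + 1 < K" using a by simp
      then have "s (q (a+1)) < s (q a)" using q3 by simp
      moreover have "1 \<le> s (q (a+1))" using pos q2 \<open>a + 1 < K\<close> by simp
      ultimately show False using a t by simp
    qed
    define q' where "q' = q(K - 1 := t)"
    have lt_j: "b < K - 1 \<Longrightarrow> q b < j" for b using q1 a aK by auto
    show ?thesis
    proof (intro exI[of _ q'] conjI allI impI)
      fix b c assume bc: "b < c \<and> c < K"
      show "q' b < q' c"
      proof (cases "c = K - 1")
        case True then show ?thesis using bc lt_j t unfolding q'_def by fastforce
      next
        case False then show ?thesis using bc q1 unfolding q'_def by auto
      qed
      show "s (q' c) < s (q' b)"
      proof (cases "c = K - 1")
        case True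
        then have b: "b < K - 1" using bc by simp
        then have "q b < j" using lt_j by simp
        have qb: "q b \<in> {1..M}" using q2 b by simp
        have "s (q b) > s j" using q3 b a aK by auto
        moreover have "s (q b) \<noteq> 2" using inj2 qb \<open>q b < j\<close> t(2) by auto
        ultimately have "s (q b) > 2" using t by simp
        then show ?thesis using True b t unfolding q'_def by simp
      next
        case False then show ?thesis using bc q3 unfolding q'_def by auto
      qed
    next
      fix b assume "b < K" then show "q' b \<in> {1..M}" using q2 t unfolding q'_def by auto
    next
      fix b assume b: "b < K"
      show "q' b \<noteq> j"
      proof (cases "b = K - 1")
        case True then show ?thesis using t unfolding q'_def by simp
      next
        case False
        then have "b < K - 1" using b by simp
        then have "q b < j" using lt_j by simp
        then show ?thesis using False unfolding q'_def by simp
      qed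
    qed
  qed
qed

lemma dec_extend:
  assumes q1: "\<forall>a b. a < b \<and> b < K \<longrightarrow> q a < q b" and q2: "\<forall>a<K. q a \<in> {1..n-1}"
    and q3: "\<forall>a b. a < b \<and> b < K \<longrightarrow> s (q b) < s (q a)" and q4: "\<forall>a<K. q a \<noteq> j"
    and agree: "\<forall>x\<in>{1..n-1}. x \<noteq> j \<longrightarrow> s x = p x" and big: "\<forall>x\<in>{1..n-1}. 2 \<le> p x"
    and pn: "p n = 1" and n: "1 \<le> n"
  shows "decs p n (Suc K)"
  unfolding decs_def
proof (intro exI[of _ "q(K := n)"] conjI allI impI)
  fix a b assume ab: "a < b \<and> b < Suc K"
  show "(q(K := n)) a < (q(K := n)) b"
  proof (cases "b = K")
    case True then show ?thesis using ab q2 by fastforce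
  next
    case False then show ?thesis using ab q1 by auto
  qed
  show "p ((q(K := n)) b) < p ((q(K := n)) a)"
  proof (cases "b = K")
    case True
    then have "a < K" using ab by simp
    then have "2 \<le> p (q a)" using big q2 by auto
    then show ?thesis using True pn \<open>a < K\<close> by simp
  next
    case False
    then have "b < K" "a < K" using ab by auto
    then have "s (q b) = p (q b)" "s (q a) = p (q a)" using agree q2 q4 by auto
    then show ?thesis using q3[rule_format, of a b] ab False \<open>b < K\<close> \<open>a < K\<close> by auto
  qed
next
  fix a assume a: "a < Suc K"
  show "(q(K := n)) a \<in> {1..n}"
  proof (cases "a = K")
    case False
    then have "q a \<in> {1..n-1}" using q2 a by simp
    then show ?thesis using False by auto
  qed (use n in simp)
qed

lemma dec_restrict:
  assumes D: "decs p n (Suc K)" and j: "j \<in> {2..n-1}" and pj: "p j = n" and p1: "p 1 = n - 1"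
    and inj1: "\<forall>x\<in>{1..n}. p x = n - 1 \<longrightarrow> x = 1" and le: "\<forall>x\<in>{1..n}. p x \<le> n"
    and agree: "\<forall>x\<in>{1..n-1}. x \<noteq> j \<longrightarrow> s x = p x"
  shows "decs s (n-1) K"
proof -
  obtain q where q1: "\<forall>a b. a < b \<and> b < Suc K \<longrightarrow> q a < q b" and q2: "\<forall>a<Suc K. q a \<in> {1..n}"
      and q3: "\<forall>a b. a < b \<and> b < Suc K \<longrightarrow> p (q b) < p (q a)" using D unfolding decs_def by blast
  have qr: "a < K \<Longrightarrow> q a \<in> {1..n-1}" for a
  proof -
    assume "a < K"
    then have "q a < q K" "q K \<le> n" "1 \<le> q a" using q1 q2 by auto
    then show ?thesis by simp
  qed
  show ?thesis
  proof (cases "\<exists>a<K. q a = j")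
    case False
    show ?thesis unfolding decs_def
    proof (intro exI[of _ q] conjI allI impI)
      fix a b assume ab: "a < b \<and> b < K"
      then show "q a < q b" using q1 by simp
      have "s (q a) = p (q a)" "s (q b) = p (q b)" using agree qr False ab by auto
      then show "s (q b) < s (q a)" using q3 ab by simp
    next
      fix a assume "a < K" then show "q a \<in> {1..n-1}" using qr by simp
    qed
  next
    case True
    then obtain a where a: "a < K" "q a = j" by blast
    have a0: "a = 0"
    proof (rule ccontr)
      assume "a \<noteq> 0"
      then have "p (q a) < p (q 0)" using q3[rule_format, of 0 a] a by simp
      moreover have "p (q 0) \<le> n" using le q2 by simp
      ultimately show False using a pj by simp
    qed
    have gt: "0 < b \<Longrightarrow> b < K \<Longrightarrow> j < q b" for b using q1 a a0 by auto
    show ?thesis unfolding decs_def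
    proof (intro exI[of _ "q(0 := 1)"] conjI allI impI)
      fix b c assume bc: "b < c \<and> c < K"
      then have "j < q c" using gt by simp
      then show "(q(0 := 1)) b < (q(0 := 1)) c"
        using bc q1 j by (cases "b = 0") auto
      have sc: "s (q c) = p (q c)" using agree qr[of c] bc \<open>j < q c\<close> by auto
      have pc: "p (q c) < n - 1"
      proof -
        have "p (q c) < p (q 0)" using q3 bc by simp
        then have "p (q c) < n" using a a0 pj by simp
        moreover have "p (q c) \<noteq> n - 1" using inj1 q2 bc \<open>j < q c\<close> j by auto
        ultimately show ?thesis by simp
      qed
      show "s ((q(0 := 1)) c) < s ((q(0 := 1)) b)"
      proof (cases "b = 0")
        case True
        have "s 1 = p 1" using agree j by auto
        then show ?thesis using True bc sc pc p1 by simp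
      next
        case False
        then have "s (q b) = p (q b)" using agree qr[of b] bc gt[of b] by auto
        then show ?thesis using False bc sc q3 by simp
      qed
    next
      fix b assume "b < K" then show "(q(0 := 1)) b \<in> {1..n-1}" using qr j by auto
    qed
  qed
qed

lemma cycle_form_nth: "l < N \<Longrightarrow> cycle_form N p ! l = (p^^l) 1"
  unfolding cycle_form_def by simp

lemma cycle_form_len[simp]: "length (cycle_form N p) = N"
  unfolding cycle_form_def by simp

lemma cycle_form_snoc:
  assumes "\<And>l. l < m \<Longrightarrow> (g^^l) 1 = (f^^l) 1" "(f^^m) 1 = y"
  shows "cycle_form (Suc m) f = cycle_form m g @ [y]"
  unfolding cycle_form_def using assms by simp

lemma fwd:
  fixes p :: "nat \<Rightarrow> nat"
  assumes n3: "3 \<le> n" and k4: "4 \<le> k"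
    and A: "cyclic_perm n p \<and> avoids (one_line n p) (delta k)
       \<and> (\<forall>i < n. avoids (rotate i (cycle_form n p)) [1,3,4,2]) \<and> p 1 = n - 1 \<and> p n = 1"
  shows "cyclic_perm (n-1) (transpose 1 n \<circ> p) \<and> avoids (one_line (n-1) (transpose 1 n \<circ> p)) (delta (k-1))
       \<and> (\<forall>i < n-1. avoids (rotate i (cycle_form (n-1) (transpose 1 n \<circ> p))) [1,3,4,2])
       \<and> (transpose 1 n \<circ> p) 1 = n - 1"
proof -
  define m where "m = n - 1"
  define s where "s = transpose 1 n \<circ> p"
  have nm: "n = Suc m" using n3 unfolding m_def by simp
  have cp: "cyclic_perm n p" and av: "avoids (one_line n p) (delta k)"
    and rot: "\<forall>i < n. avoids (rotate i (cycle_form n p)) [1,3,4,2]" and p1: "p 1 = n - 1" and pn: "p n = 1"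
    using A by auto
  have P: "p permutes {1..n}" and cov: "\<forall>x\<in>{1..n}. \<exists>i. (p^^i) 1 = x" using cp unfolding cyclic_perm_def by auto
  have injp: "inj p" using permutes_inj[OF P] .
  have pin: "x \<in> {1..n} \<Longrightarrow> p x \<in> {1..n}" for x using permutes_in_image[OF P] by simp
  have ret: "(p^^n) 1 = 1" using cyc_struct(1)[OF cp] n3 by simp
  have dis: "\<And>l l'. l < n \<Longrightarrow> l' < n \<Longrightarrow> (p^^l) 1 = (p^^l') 1 \<Longrightarrow> l = l'"
    using cyc_struct(2)[OF cp] n3 by simp
  have "p ((p^^m) 1) = p n" using ret pn nm by simp
  then have last: "(p^^m) 1 = n" using injp by (simp add: inj_eq)
  have s_apply: "s x = transpose 1 n (p x)" for x unfolding s_def by simp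
  have agree: "l < m \<Longrightarrow> (s^^l) 1 = (p^^l) 1" for l
  proof (induction l)
    case 0 then show ?case by simp
  next
    case (Suc l)
    have a: "(p^^Suc l) 1 \<noteq> 1" using dis[of "Suc l" 0] Suc.prems nm by auto
    have b: "(p^^Suc l) 1 \<noteq> n" using dis[of "Suc l" m] Suc.prems nm last by auto
    have ih: "(s^^l) 1 = (p^^l) 1" using Suc.IH Suc.prems by simp
    have "(s^^Suc l) 1 = s ((p^^l) 1)" using ih by simp
    also have "\<dots> = transpose 1 n ((p^^Suc l) 1)" by (simp add: s_apply)
    finally show ?case using a b by simp
  qed
  have cf0: "cycle_form (Suc m) p = cycle_form m s @ [n]"
    by (rule cycle_form_snoc) (use agree last in auto)
  have cf: "cycle_form n p = cycle_form m s @ [n]" using cf0 nm by simp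
  have sP: "s permutes {1..m}"
  proof -
    have "s permutes {1..n}" unfolding s_def
      by (rule permutes_compose[OF P permutes_swap_id]) (use n3 in auto)
    then show ?thesis
    proof (rule permutes_superset)
      fix x assume "x \<in> {1..n} - {1..m}"
      then have "x = n" using nm by auto
      then show "s x = x" using pn by (simp add: s_apply)
    qed
  qed
  have scov: "\<forall>x\<in>{1..m}. \<exists>i. (s^^i) 1 = x"
  proof
    fix x assume x: "x \<in> {1..m}"
    then have "x \<in> {1..n}" using nm by auto
    then obtain i where "(p^^i) 1 = x" using cov by blast
    then have i: "(p^^(i mod n)) 1 = x" using funpow_mod_eq[where f=p and n=n and x=1 and m=i] ret by simp
    have "i mod n < n" using n3 by simp
    moreover have "i mod n \<noteq> m"
    proof
      assume "i mod n = m"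
      then have "x = n" using i last by simp
      then show False using x nm by simp
    qed
    ultimately have "i mod n < m" using nm by linarith
    then show "\<exists>i. (s^^i) 1 = x" using agree i by blast
  qed
  have s1: "s 1 = m" using p1 n3 unfolding m_def by (simp add: s_apply)
  have "cycfree (cycle_form n p)" using rot rot_avoid_iff[of "cycle_form n p"] by simp
  then have "cycfree (cycle_form m s)" using cf cycfree_append_fwd by simp
  then have srot: "\<forall>i < m. avoids (rotate i (cycle_form m s)) [1,3,4,2]"
    using rot_avoid_iff[of "cycle_form m s"] by simp
  have sdelta: "avoids (one_line m s) (delta (k-1))"
    unfolding avoids_def contains_delta
  proof
    assume D: "decs s m (k-1)"
    show False
    proof (cases "n = 3")
      case True then show False using decs_le[OF D] k4 unfolding m_def by simp
    next
      case False
      then have n4: "4 \<le> n" using n3 by simp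
      have img: "p ` {1..n} = {1..n}" using permutes_image[OF P] .
      have "n \<in> p ` {1..n}" using img n3 by simp
      then obtain j where j: "j \<in> {1..n}" "p j = n" by blast
      have "2 \<in> p ` {1..n}" using img n3 by simp
      then obtain t where t: "t \<in> {1..n}" "2 = p t" by (rule imageE)
      then have t: "t \<in> {1..n}" "p t = 2" by simp_all
      have jn: "j \<noteq> n" using j pn n3 by auto
      have j1: "j \<noteq> 1" using j p1 n3 by auto
      have tn: "t \<noteq> n" using t pn by auto
      have t1: "t \<noteq> 1" using t p1 n4 by auto
      have pos: "x \<in> {1..n} \<Longrightarrow> \<exists>l<n. (p^^l) 1 = x" for x
      proof -
        assume "x \<in> {1..n}"
        then obtain i where "(p^^i) 1 = x" using cov by blast
        then have "(p^^(i mod n)) 1 = x" using funpow_mod_eq[where f=p and n=n and x=1 and m=i] ret by simp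
        then show ?thesis using n3 by (intro exI[of _ "i mod n"]) simp
      qed
      obtain u where u: "u < n" "(p^^u) 1 = t" using pos[OF t(1)] by blast
      have u2: "(p^^Suc u) 1 = 2" using u t by simp
      have su: "Suc u < n"
      proof (rule ccontr)
        assume "\<not> Suc u < n" then have "Suc u = n" using u by simp
        then show False using u2 ret by simp
      qed
      have t2: "t \<noteq> 2" using dis[of u "Suc u"] u u2 su by auto
      have jt: "j < t"
      proof (rule ccontr)
        assume "\<not> j < t"
        moreover have "j \<noteq> t" using j t n3 by auto
        ultimately have tj: "t < j" by simp
        have "p ((p^^(m-1)) 1) = p j" using last j nm n3 by (cases m) auto
        then have pj: "(p^^(m-1)) 1 = j" using injp by (simp add: inj_eq)
        have "Suc u \<noteq> m - 1"
        proof
          assume "Suc u = m - 1"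
          then have "j = 2" using pj u2 by simp
          then have "t = 1" using tj t(1) by simp
          then show False using t1 by simp
        qed
        moreover have "Suc u \<noteq> m" using u2 last n3 by auto
        ultimately have sum: "Suc u < m - 1" using su nm by simp
        let ?w = "cycle_form n p"
        have "cyc n (Suc u) (m-1) m u" unfolding cyc_def using sum nm by auto
        moreover have "occ ?w (Suc u) (m-1) m u"
          unfolding occ_def using sum nm u u2 pj last tj t t2 t1 jn j by (simp add: cycle_form_nth)
        ultimately have "\<not> cycfree ?w" unfolding cycfree_def by auto
        then show False using \<open>cycfree (cycle_form n p)\<close> by simp
      qed
      have sx: "x \<in> {1..m} \<Longrightarrow> s x \<in> {1..m}" for x using permutes_in_image[OF sP] by simp
      have "\<exists>q. (\<forall>a b. a < b \<and> b < k-1 \<longrightarrow> q a < q b) \<and> (\<forall>a<k-1. q a \<in> {1..m})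
          \<and> (\<forall>a b. a < b \<and> b < k-1 \<longrightarrow> s (q b) < s (q a)) \<and> (\<forall>a<k-1. q a \<noteq> j)"
      proof (rule dec_avoid_j[OF D, of j t])
        show "j \<in> {1..m}" using j jn nm by auto
        show "t \<in> {1..m}" using t tn nm by auto
        show "j < t" by fact
        show "s j = 1" using j by (simp add: s_apply)
        show "s t = 2" using t n4 by (simp add: s_apply)
        show "\<forall>x\<in>{1..m}. 1 \<le> s x" using sx by auto
        show "\<forall>x\<in>{1..m}. s x = 2 \<longrightarrow> x = t"
        proof (intro ballI impI)
          fix x assume "x \<in> {1..m}" "s x = 2"
          then have "p x = 2" using n4 by (simp add: s_apply transpose_eq_iff)
          then have "p x = p t" using t by simp
          then show "x = t" by (rule injD[OF injp])
        qed
        show "\<forall>x\<in>{1..m}. s x = 1 \<longrightarrow> x = j"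
        proof (intro ballI impI)
          fix x assume "x \<in> {1..m}" "s x = 1"
          then have "p x = n" using n4 by (auto simp add: s_apply transpose_eq_iff)
          then have "p x = p j" using j by simp
          then show "x = j" by (rule injD[OF injp])
        qed
        show "2 \<le> k - 1" using k4 by simp
      qed
      then obtain q where q: "\<forall>a b. a < b \<and> b < k-1 \<longrightarrow> q a < q b" "\<forall>a<k-1. q a \<in> {1..n-1}"
          "\<forall>a b. a < b \<and> b < k-1 \<longrightarrow> s (q b) < s (q a)" "\<forall>a<k-1. q a \<noteq> j" unfolding m_def by blast
      have "decs p n (Suc (k-1))"
      proof (rule dec_extend[OF q, of p])
        show "\<forall>x\<in>{1..n-1}. x \<noteq> j \<longrightarrow> s x = p x"
        proof (intro ballI impI)
          fix x assume x: "x \<in> {1..n-1}" "x \<noteq> j"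
          have "p x \<noteq> n"
          proof
            assume "p x = n" then have "p x = p j" using j by simp
            then show False using x injp by (simp add: inj_eq)
          qed
          moreover have "p x \<noteq> 1"
          proof
            assume "p x = 1" then have "p x = p n" using pn by simp
            then have "x = n" using injp by (simp add: inj_eq)
            then show False using x n3 by simp
          qed
          ultimately show "s x = p x" by (simp add: s_apply)
        qed
        show "\<forall>x\<in>{1..n-1}. 2 \<le> p x"
        proof
          fix x assume x: "x \<in> {1..n-1}"
          then have "p x \<in> {1..n}" using pin by auto
          moreover have "p x \<noteq> 1"
          proof
            assume "p x = 1" then have "p x = p n" using pn by simp
            then have "x = n" using injp by (simp add: inj_eq)
            then show False using x n3 by simp
          qed
          ultimately show "2 \<le> p x" by auto
        qed
        show "p n = 1" by fact
        show "1 \<le> n" using n3 by simp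
      qed
      then have "contains_pattern (one_line n p) (delta k)" using k4 contains_delta by simp
      then show False using av unfolding avoids_def by simp
    qed
  qed
  show ?thesis using sP scov sdelta srot s1 unfolding cyclic_perm_def s_def m_def by simp
qed

lemma bwd:
  fixes s :: "nat \<Rightarrow> nat"
  assumes n3: "3 \<le> n" and k4: "4 \<le> k"
    and B: "cyclic_perm (n-1) s \<and> avoids (one_line (n-1) s) (delta (k-1))
       \<and> (\<forall>i < n-1. avoids (rotate i (cycle_form (n-1) s)) [1,3,4,2]) \<and> s 1 = n - 1"
  shows "cyclic_perm n (transpose 1 n \<circ> s) \<and> avoids (one_line n (transpose 1 n \<circ> s)) (delta k)
       \<and> (\<forall>i < n. avoids (rotate i (cycle_form n (transpose 1 n \<circ> s))) [1,3,4,2])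
       \<and> (transpose 1 n \<circ> s) 1 = n - 1 \<and> (transpose 1 n \<circ> s) n = 1"
proof -
  define m where "m = n - 1"
  define p where "p = transpose 1 n \<circ> s"
  have nm: "n = Suc m" using n3 unfolding m_def by simp
  have m2: "2 \<le> m" using n3 unfolding m_def by simp
  have cs: "cyclic_perm m s" and av: "avoids (one_line m s) (delta (k-1))"
    and rot: "\<forall>i < m. avoids (rotate i (cycle_form m s)) [1,3,4,2]" and s1: "s 1 = m"
    using B unfolding m_def by auto
  have sP: "s permutes {1..m}" and scov: "\<forall>x\<in>{1..m}. \<exists>i. (s^^i) 1 = x" using cs unfolding cyclic_perm_def by auto
  have injs: "inj s" using permutes_inj[OF sP] .
  have sin: "x \<in> {1..m} \<Longrightarrow> s x \<in> {1..m}" for x using permutes_in_image[OF sP] by simp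
  have sn: "s n = n" using permutes_not_in[OF sP] nm by simp
  have ret: "(s^^m) 1 = 1" using cyc_struct(1)[OF cs] m2 by simp
  have dis: "\<And>l l'. l < m \<Longrightarrow> l' < m \<Longrightarrow> (s^^l) 1 = (s^^l') 1 \<Longrightarrow> l = l'"
    using cyc_struct(2)[OF cs] m2 by simp
  have itin: "(s^^l) 1 \<in> {1..m}" for l using iter_in[OF sP] m2 by simp
  have p_apply: "p x = transpose 1 n (s x)" for x unfolding p_def by simp
  have agree: "l < m \<Longrightarrow> (p^^l) 1 = (s^^l) 1" for l
  proof (induction l)
    case 0 then show ?case by simp
  next
    case (Suc l)
    have a: "(s^^Suc l) 1 \<noteq> 1" using dis[of "Suc l" 0] Suc.prems by auto
    have b: "(s^^Suc l) 1 \<noteq> n" using itin[of "Suc l"] nm by auto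
    have ih: "(p^^l) 1 = (s^^l) 1" using Suc.IH Suc.prems by simp
    have "(p^^Suc l) 1 = p ((s^^l) 1)" using ih by simp
    also have "\<dots> = transpose 1 n ((s^^Suc l) 1)" by (simp add: p_apply)
    finally show ?case using a b by simp
  qed
  have last: "(p^^m) 1 = n"
  proof -
    have "(p^^m) 1 = p ((p^^(m-1)) 1)" using m2 by (cases m) auto
    also have "\<dots> = p ((s^^(m-1)) 1)" using agree m2 by simp
    also have "\<dots> = transpose 1 n ((s^^m) 1)" using m2 by (cases m) (auto simp: p_apply)
    finally show ?thesis using ret by simp
  qed
  have cf0: "cycle_form (Suc m) p = cycle_form m s @ [n]"
    by (rule cycle_form_snoc) (use agree last in auto)
  have cf: "cycle_form n p = cycle_form m s @ [n]" using cf0 nm by simp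
  have pP: "p permutes {1..n}" unfolding p_def
    by (rule permutes_compose[OF permutes_subset[OF sP] permutes_swap_id]) (use n3 nm in auto)
  have pcov: "\<forall>x\<in>{1..n}. \<exists>i. (p^^i) 1 = x"
  proof
    fix x assume x: "x \<in> {1..n}"
    show "\<exists>i. (p^^i) 1 = x"
    proof (cases "x = n")
      case True then show ?thesis using last by blast
    next
      case False
      then have "x \<in> {1..m}" using x nm by auto
      then obtain i where "(s^^i) 1 = x" using scov by blast
      then have i: "(s^^(i mod m)) 1 = x" using funpow_mod_eq[where f=s and n=m and x=1 and m=i] ret by simp
      have "i mod m < m" using m2 by simp
      then have "(p^^(i mod m)) 1 = x" using agree i by simp
      then show ?thesis by blast
    qed
  qed
  have p1: "p 1 = n - 1" using s1 m2 nm by (simp add: p_apply)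
  have pn: "p n = 1" using sn by (simp add: p_apply)
  have "cycfree (cycle_form m s)" using rot rot_avoid_iff[of "cycle_form m s"] by simp
  moreover have "distinct (cycle_form m s)"
    unfolding distinct_conv_nth using dis by (simp add: cycle_form_nth) blast
  moreover have "cycle_form m s ! 0 = 1" using m2 by (simp add: cycle_form_nth)
  moreover have "cycle_form m s ! 1 = m" using m2 s1 by (simp add: cycle_form_nth)
  moreover have "set (cycle_form m s) \<subseteq> {1..m}" unfolding cycle_form_def using itin by auto
  ultimately have "cycfree (cycle_form m s @ [n])"
    using cycfree_append_bwd[of "cycle_form m s" m n] m2 nm by simp
  then have prot: "\<forall>i < n. avoids (rotate i (cycle_form n p)) [1,3,4,2]"
    using rot_avoid_iff[of "cycle_form n p"] cf nm by simp
  have pdelta: "avoids (one_line n p) (delta k)"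
    unfolding avoids_def contains_delta
  proof
    assume D: "decs p n k"
    have img: "s ` {1..m} = {1..m}" using permutes_image[OF sP] .
    define j where "j = inv s 1"
    have sj: "s j = 1" unfolding j_def by (rule permutes_inverses(1)[OF sP])
    have "s j \<in> {1..m}" using sj m2 by simp
    then have "j \<in> {1..m}" using permutes_in_image[OF sP, of j] by blast
    then have j: "j \<in> {1..m}" "s j = 1" using sj by simp_all
    have j1: "j \<noteq> 1"
    proof
      assume "j = 1" then have "s 1 = 1" using j by simp
      then show False using s1 m2 by simp
    qed
    have pj: "p j = n" by (simp add: p_apply j(2))
    have "decs s (n-1) (k-1)"
    proof (rule dec_restrict[of p n "k-1" j])
      have "Suc (k-1) = k" using k4 by simp
      then show "decs p n (Suc (k-1))" using D by simp
      have "1 \<le> j" "j \<le> m" using j(1) by auto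
      then show "j \<in> {2..n-1}" using j1 nm by simp
      show "p j = n" by fact
      show "p 1 = n - 1" by fact
      show "\<forall>x\<in>{1..n}. p x = n - 1 \<longrightarrow> x = 1"
      proof (intro ballI impI)
        fix x assume "x \<in> {1..n}" "p x = n - 1"
        then have "p x = p 1" using p1 by simp
        then show "x = 1" by (rule injD[OF permutes_inj[OF pP]])
      qed
      show "\<forall>x\<in>{1..n}. p x \<le> n"
      proof
        fix x assume "x \<in> {1..n}"
        then have "p x \<in> {1..n}" using permutes_in_image[OF pP, of x] by blast
        then show "p x \<le> n" by simp
      qed
      show "\<forall>x\<in>{1..n-1}. x \<noteq> j \<longrightarrow> s x = p x"
      proof (intro ballI impI)
        fix x assume x: "x \<in> {1..n-1}" "x \<noteq> j"
        have "s x \<noteq> 1"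
        proof
          assume "s x = 1" then have "s x = s j" using j by simp
          then have "x = j" by (rule injD[OF injs])
          then show False using x by simp
        qed
        moreover have "s x \<noteq> n"
        proof -
          have "x \<in> {1..m}" using x unfolding m_def by simp
          then have "s x \<le> m" using sin[of x] by simp
          then show ?thesis using nm by simp
        qed
        ultimately show "s x = p x" by (simp add: p_apply)
      qed
    qed
    then show False using av contains_delta unfolding avoids_def m_def by simp
  qed
  show ?thesis using pP pcov pdelta prot p1 pn unfolding cyclic_perm_def p_def by simp
qed

theorem lemma3p5:
  fixes n k :: nat
  assumes "n \<ge> 3" and "k \<ge> 4"
  shows "card {p. cyclic_perm n p \<and> avoids (one_line n p) (delta k)
       \<and> (\<forall>i < n. avoids (rotate i (cycle_form n p)) [1,3,4,2])
       \<and> p 1 = n - 1 \<and> p n = 1}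
         = b_circ_1342 (n - 1) (k - 1)"
proof -
  define A where "A = {p. cyclic_perm n p \<and> avoids (one_line n p) (delta k)
       \<and> (\<forall>i < n. avoids (rotate i (cycle_form n p)) [1,3,4,2])
       \<and> p 1 = n - 1 \<and> p n = 1}"
  define B where "B = {s. cyclic_perm (n-1) s \<and> avoids (one_line (n-1) s) (delta (k-1))
       \<and> (\<forall>i < n-1. avoids (rotate i (cycle_form (n-1) s)) [1,3,4,2]) \<and> s 1 = n - 1}"
  have inv: "transpose 1 n \<circ> (transpose 1 n \<circ> p) = p" for p :: "nat \<Rightarrow> nat"
    by (simp add: fun_eq_iff)
  have "bij_betw (\<lambda>p. transpose 1 n \<circ> p) A B"
  proof (rule bij_betwI[where g="\<lambda>p. transpose 1 n \<circ> p"])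
    show "(\<lambda>p. transpose 1 n \<circ> p) \<in> A \<rightarrow> B"
      using fwd[OF assms] unfolding A_def B_def by blast
    show "(\<lambda>p. transpose 1 n \<circ> p) \<in> B \<rightarrow> A"
      using bwd[OF assms] unfolding A_def B_def by blast
  qed (rule inv)+
  then have "card A = card B" by (rule bij_betw_same_card)
  then show ?thesis unfolding A_def B_def b_circ_1342_def .
qed

end
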